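(* Let $d\geq 1$ and let $\mu$ be a probability distribution on $Q_d$ such that $w_i^0>\frac12$ for every $i\in[d]$. If $(A,B)$ with $A,B\in Q_d$ is an equilibrium, then $A=B=\mathbf 0$. Consequently an equilibrium exists if and only if $(\mathbf 0,\mathbf 0)$ is an equilibrium, i.e. if and only if $P_1(X,\mathbf 0)\le \frac12$ for all $X\in Q_d$.
   Context: $Q_d=\{0,1\}^d$ with the Hamming distance $d(X,Y)=|\{i: x_i\neq y_i\}|$. A probability distribution on $Q_d$ is a function $\mu:Q_d\to\mathbb R_{\ge0}$ with $\sum_{V\in Q_d}\mu(V)=1$, extended to subsets by $\mu(\mathcal A)=\sum_{V\in\mathcal A}\mu(V)$. For $A,B\in Q_d$ let $V(A,B)=\{X\in Q_d: d(X,A)<d(X,B)\}$ and $T(A,B)=\{X\in Q_d: d(X,A)=d(X,B)\}$. The payoffs in position $(A,B)$ (Player 1 at $A$, Player 2 at $B$) are $P_1(A,B)=\mu(V(A,B))+\frac12\mu(T(A,B))$ and $P_2(A,B)=\mu(V(B,A))+\frac12\mu(T(A,B))$. The pair $(A,B)$ is an equilibrium if $P_1(A,B)\ge P_1(A',B)$ for all $A'\in Q_d$ and $P_2(A,B)\ge P_2(A,B')$ for all $B'\in Q_d$. For $i\in[d]$, $w_i^0=\mu(\{X\in Q_d: x_i=0\})$. $\mathbf 0=(0,\dots,0)$. *)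

theory Defs
  imports Complex_Main
begin

text \<open>The hypercube Q_d: bit-vectors of length d, represented as boolean lists
  (True = 1, False = 0). Coordinates are indexed by 0..d-1.\<close>

definition cube :: "nat \<Rightarrow> bool list set" where
  "cube d = {xs. length xs = d}"

definition hamming :: "bool list \<Rightarrow> bool list \<Rightarrow> nat" where
  "hamming X Y = card {i. i < length X \<and> X ! i \<noteq> Y ! i}"

definition zero_vec :: "nat \<Rightarrow> bool list" where
  "zero_vec d = replicate d False"

definition is_distribution :: "nat \<Rightarrow> (bool list \<Rightarrow> real) \<Rightarrow> bool" where
  "is_distribution d \<mu> \<longleftrightarrow> (\<forall>V\<in>cube d. \<mu> V \<ge> 0) \<and> (\<Sum>V\<in>cube d. \<mu> V) = 1"

definition measure_of :: "(bool list \<Rightarrow> real) \<Rightarrow> bool list set \<Rightarrow> real" where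
  "measure_of \<mu> S = (\<Sum>V\<in>S. \<mu> V)"

definition Vor :: "nat \<Rightarrow> bool list \<Rightarrow> bool list \<Rightarrow> bool list set" where
  "Vor d A B = {X\<in>cube d. hamming X A < hamming X B}"

definition Tie :: "nat \<Rightarrow> bool list \<Rightarrow> bool list \<Rightarrow> bool list set" where
  "Tie d A B = {X\<in>cube d. hamming X A = hamming X B}"

definition P1 :: "nat \<Rightarrow> (bool list \<Rightarrow> real) \<Rightarrow> bool list \<Rightarrow> bool list \<Rightarrow> real" where
  "P1 d \<mu> A B = measure_of \<mu> (Vor d A B) + measure_of \<mu> (Tie d A B) / 2"

definition P2 :: "nat \<Rightarrow> (bool list \<Rightarrow> real) \<Rightarrow> bool list \<Rightarrow> bool list \<Rightarrow> real" where
  "P2 d \<mu> A B = measure_of \<mu> (Vor d B A) + measure_of \<mu> (Tie d A B) / 2"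

definition is_equilibrium :: "nat \<Rightarrow> (bool list \<Rightarrow> real) \<Rightarrow> bool list \<Rightarrow> bool list \<Rightarrow> bool" where
  "is_equilibrium d \<mu> A B \<longleftrightarrow>
     (\<forall>A'\<in>cube d. P1 d \<mu> A B \<ge> P1 d \<mu> A' B) \<and>
     (\<forall>B'\<in>cube d. P2 d \<mu> A B \<ge> P2 d \<mu> A B')"

definition w0 :: "nat \<Rightarrow> (bool list \<Rightarrow> real) \<Rightarrow> nat \<Rightarrow> real" where
  "w0 d \<mu> i = measure_of \<mu> {X\<in>cube d. X ! i = False}"

end

theory Submission
  imports Defs
begin

lemma fin_cube: "finite (cube d)"
proof -
  have "cube d = {xs. set xs \<subseteq> (UNIV::bool set) \<and> length xs = d}" by (auto simp: cube_def)
  thus ?thesis using finite_lists_length_eq[of "UNIV::bool set" d] by simp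
qed

lemma total:
  assumes "is_distribution d \<mu>"
  shows "measure_of \<mu> (Vor d A B) + measure_of \<mu> (Vor d B A) + measure_of \<mu> (Tie d A B) = 1"
proof -
  have u: "cube d = (Vor d A B \<union> Vor d B A) \<union> Tie d A B" by (auto simp: Vor_def Tie_def)
  have f1: "finite (Vor d A B)" "finite (Vor d B A)" "finite (Tie d A B)"
    using fin_cube by (auto simp: Vor_def Tie_def)
  have "(\<Sum>V\<in>cube d. \<mu> V) = (\<Sum>V\<in>Vor d A B \<union> Vor d B A. \<mu> V) + (\<Sum>V\<in>Tie d A B. \<mu> V)"
    unfolding u by (rule sum.union_disjoint) (use f1 in \<open>auto simp: Vor_def Tie_def\<close>)
  also have "(\<Sum>V\<in>Vor d A B \<union> Vor d B A. \<mu> V) = (\<Sum>V\<in>Vor d A B. \<mu> V) + (\<Sum>V\<in>Vor d B A. \<mu> V)"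
    by (rule sum.union_disjoint) (use f1 in \<open>auto simp: Vor_def Tie_def\<close>)
  finally show ?thesis using assms by (simp add: is_distribution_def measure_of_def)
qed

lemma selfP1: assumes "is_distribution d \<mu>" shows "P1 d \<mu> B B = 1/2"
proof -
  have "Vor d B B = {}" "Tie d B B = cube d" by (auto simp: Vor_def Tie_def)
  thus ?thesis using assms by (simp add: P1_def measure_of_def is_distribution_def)
qed

lemma selfP2: assumes "is_distribution d \<mu>" shows "P2 d \<mu> B B = 1/2"
proof -
  have "Vor d B B = {}" "Tie d B B = cube d" by (auto simp: Vor_def Tie_def)
  thus ?thesis using assms by (simp add: P2_def measure_of_def is_distribution_def)
qed

lemma flip_ham:
  assumes "length X = d" "length B = d" "i < d" "B ! i"
  shows "(\<not> X ! i \<longrightarrow> hamming X B = Suc (hamming X (B[i:=False])))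
       \<and> (X ! i \<longrightarrow> hamming X (B[i:=False]) = Suc (hamming X B))"
proof -
  let ?S = "{j. j < length X \<and> X ! j \<noteq> B ! j}"
  let ?T = "{j. j < length X \<and> X ! j \<noteq> B[i:=False] ! j}"
  have fS: "finite ?S" "finite ?T" by auto
  have e: "\<And>j. j \<noteq> i \<Longrightarrow> B[i:=False] ! j = B ! j" by simp
  have ei: "B[i:=False] ! i = False" using assms by simp
  have 1: "?S = insert i ?T \<and> i \<notin> ?T" if "\<not> X ! i"
  proof -
    have "?S = insert i ?T" using that assms e ei by (auto simp: nth_list_update split: if_splits)
    thus ?thesis using that ei by simp
  qed
  have 2: "?T = insert i ?S \<and> i \<notin> ?S" if "X ! i"
  proof -
    have "?T = insert i ?S" using that assms e ei by (auto simp: nth_list_update split: if_splits)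
    thus ?thesis using that assms by simp
  qed
  show ?thesis unfolding hamming_def
  proof (intro conjI impI)
    assume "\<not> X ! i" thus "card ?S = Suc (card ?T)" using 1 fS by (simp add: card_insert_disjoint)
  next
    assume "X ! i" thus "card ?T = Suc (card ?S)" using 2 fS by (simp add: card_insert_disjoint)
  qed
qed

lemma flip_sets:
  assumes "length B = d" "i < d" "B ! i"
  shows "Vor d (B[i:=False]) B = {X\<in>cube d. X ! i = False}"
    and "Tie d (B[i:=False]) B = {}" "Tie d B (B[i:=False]) = {}"
proof -
  have k: "\<And>X. X \<in> cube d \<Longrightarrow> (\<not> X ! i \<longrightarrow> hamming X B = Suc (hamming X (B[i:=False])))
       \<and> (X ! i \<longrightarrow> hamming X (B[i:=False]) = Suc (hamming X B))"
    using flip_ham[OF _ assms] by (simp add: cube_def)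
  show "Vor d (B[i:=False]) B = {X\<in>cube d. X ! i = False}"
  proof (rule set_eqI)
    fix X show "X \<in> Vor d (B[i:=False]) B \<longleftrightarrow> X \<in> {X\<in>cube d. X ! i = False}"
      using k[of X] unfolding Vor_def by (cases "X ! i") auto
  qed
  show "Tie d (B[i:=False]) B = {}"
  proof (rule equals0I)
    fix X assume "X \<in> Tie d (B[i:=False]) B"
    thus False using k[of X] unfolding Tie_def by (cases "X ! i") auto
  qed
  show "Tie d B (B[i:=False]) = {}"
  proof (rule equals0I)
    fix X assume "X \<in> Tie d B (B[i:=False])"
    thus False using k[of X] unfolding Tie_def by (cases "X ! i") auto
  qed
qed

lemma flip_P1:
  assumes "length B = d" "i < d" "B ! i"
  shows "P1 d \<mu> (B[i:=False]) B = w0 d \<mu> i"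
  using flip_sets[OF assms] by (simp add: P1_def w0_def measure_of_def)

lemma flip_P2:
  assumes "length B = d" "i < d" "B ! i"
  shows "P2 d \<mu> B (B[i:=False]) = w0 d \<mu> i"
  using flip_sets[OF assms] by (simp add: P2_def w0_def measure_of_def)

lemma nz:
  assumes "B \<in> cube d" "B \<noteq> zero_vec d"
  shows "\<exists>i<d. B ! i"
proof (rule ccontr)
  assume "\<not> ?thesis"
  hence "B = zero_vec d" using assms(1) unfolding cube_def zero_vec_def
    by (auto intro!: nth_equalityI)
  thus False using assms by simp
qed

theorem mainTheorem1:
  fixes d :: nat and \<mu> :: "bool list \<Rightarrow> real"
  assumes "d \<ge> 1"
    and "is_distribution d \<mu>"
    and "\<forall>i<d. w0 d \<mu> i > 1/2"
  shows "(\<forall>A\<in>cube d. \<forall>B\<in>cube d. is_equilibrium d \<mu> A B \<longrightarrow>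
            A = zero_vec d \<and> B = zero_vec d)
       \<and> ((\<exists>A\<in>cube d. \<exists>B\<in>cube d. is_equilibrium d \<mu> A B)
            \<longleftrightarrow> is_equilibrium d \<mu> (zero_vec d) (zero_vec d))
       \<and> (is_equilibrium d \<mu> (zero_vec d) (zero_vec d)
            \<longleftrightarrow> (\<forall>X\<in>cube d. P1 d \<mu> X (zero_vec d) \<le> 1/2))"
proof -
  have z: "zero_vec d \<in> cube d" by (simp add: zero_vec_def cube_def)
  have part1: "\<forall>A\<in>cube d. \<forall>B\<in>cube d. is_equilibrium d \<mu> A B \<longrightarrow>
            A = zero_vec d \<and> B = zero_vec d"
  proof (intro ballI impI)
    fix A B assume A: "A \<in> cube d" and B: "B \<in> cube d" and eq: "is_equilibrium d \<mu> A B"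
    have s: "P1 d \<mu> A B + P2 d \<mu> A B = 1"
      using total[OF assms(2), of A B] by (simp add: P1_def P2_def)
    have "P1 d \<mu> A B \<ge> 1/2" using eq B selfP1[OF assms(2)] unfolding is_equilibrium_def by metis
    moreover have "P2 d \<mu> A B \<ge> 1/2" using eq A selfP2[OF assms(2)] unfolding is_equilibrium_def by metis
    ultimately have h: "P1 d \<mu> A B = 1/2" "P2 d \<mu> A B = 1/2" using s by linarith+
    show "A = zero_vec d \<and> B = zero_vec d"
    proof
      show "B = zero_vec d"
      proof (rule ccontr)
        assume "B \<noteq> zero_vec d"
        then obtain i where i: "i < d" "B ! i" using nz B by blast
        have lB: "length B = d" using B by (simp add: cube_def)
        have "B[i:=False] \<in> cube d" using lB by (simp add: cube_def)
        hence "P1 d \<mu> (B[i:=False]) B \<le> 1/2" using eq h unfolding is_equilibrium_def by metis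
        thus False using flip_P1[OF lB i] assms(3) i by force
      qed
      show "A = zero_vec d"
      proof (rule ccontr)
        assume "A \<noteq> zero_vec d"
        then obtain i where i: "i < d" "A ! i" using nz A by blast
        have lA: "length A = d" using A by (simp add: cube_def)
        have "A[i:=False] \<in> cube d" using lA by (simp add: cube_def)
        hence "P2 d \<mu> A (A[i:=False]) \<le> 1/2" using eq h unfolding is_equilibrium_def by metis
        thus False using flip_P2[OF lA i] assms(3) i by force
      qed
    qed
  qed
  have part2: "(\<exists>A\<in>cube d. \<exists>B\<in>cube d. is_equilibrium d \<mu> A B)
            \<longleftrightarrow> is_equilibrium d \<mu> (zero_vec d) (zero_vec d)"
    using part1 z by blast
  have p2eq: "P2 d \<mu> (zero_vec d) B' = P1 d \<mu> B' (zero_vec d)" for B'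
  proof -
    have "Tie d (zero_vec d) B' = Tie d B' (zero_vec d)" by (auto simp: Tie_def)
    thus ?thesis by (simp add: P1_def P2_def)
  qed
  have part3: "is_equilibrium d \<mu> (zero_vec d) (zero_vec d)
            \<longleftrightarrow> (\<forall>X\<in>cube d. P1 d \<mu> X (zero_vec d) \<le> 1/2)"
  proof -
    have a: "P1 d \<mu> (zero_vec d) (zero_vec d) = 1/2" "P2 d \<mu> (zero_vec d) (zero_vec d) = 1/2"
      using selfP1[OF assms(2)] selfP2[OF assms(2)] by blast+
    show ?thesis unfolding is_equilibrium_def a p2eq by blast
  qed
  show ?thesis using part1 part2 part3 by blast
qed

end
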